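(* Let $r\ge 2$ and $m$ be integers with $0\le 2m\le r$, $n=2r-4m$, and let $f:S^2(S^r(\mathbb{C}^2))\to S^{n}(\mathbb{C}^2)$ be an $\mathfrak{sl}_2(\mathbb{C})$-equivariant linear map, written $f=\sum_{k=0}^n q_k w_k$. Let $k,i$ be integers with $0\le k\le r-2m$ and $0\le i\le r$, and let $j=2m+k-i$. Then $$q_k(x_ix_j)=q_{n-k}(x_{r-i}x_{r-j}),$$ with the convention $x_l=0$ for $l\notin[0,r]$.
   Context: $\mathfrak{sl}_2(\mathbb{C})$ has basis $X=\begin{pmatrix}0&1\\0&0\end{pmatrix}$, $H=\begin{pmatrix}1&0\\0&-1\end{pmatrix}$, $Y=\begin{pmatrix}0&0\\1&0\end{pmatrix}$, acting on the irreducible modules $S^d(\mathbb{C}^2)$. Let $x_0\in S^r(\mathbb{C}^2)$ be a highest weight vector and $x_i=Y^ix_0/i!$ ($0\le i\le r$), so $Yx_i=(i+1)x_{i+1}$, $Xx_i=(r-i+1)x_{i-1}$, $Hx_i=(r-2i)x_i$. Let $w_0\in S^n(\mathbb{C}^2)$ be a highest weight vector and $w_k=Y^kw_0/k!$ ($0\le k\le n$). Writing $f=\sum_{k=0}^n q_kw_k$ means $f(u)=\sum_k q_k(u)w_k$ for linear forms $q_k$ on $S^2(S^r(\mathbb{C}^2))$; $q_k(x_ix_j)$ is the value on the product $x_ix_j$. *)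

theory Defs
  imports Complex_Main
begin

text \<open>
  S^r(C^2) has basis x_0..x_r, S^n(C^2) has basis w_0..w_n, with the sl_2 actions
    Y x_i = (i+1) x_(i+1),  X x_i = (r-i+1) x_(i-1),  H x_i = (r-2i) x_i   (x_l = 0 for l outside [0,r]),
  and similarly for w_k with r replaced by n.  S^2(S^r(C^2)) is spanned by the products x_i x_j
  (x_i x_j = x_j x_i), on which sl_2 acts by derivations: Z(x_i x_j) = (Z x_i) x_j + x_i (Z x_j).
  A linear map f : S^2(S^r(C^2)) -> S^n(C^2), f = sum_k q_k w_k, is represented by the function
  q k i j = q_k(x_i x_j), i.e. the w_k-coordinate of f(x_i x_j).  It must be symmetric in i,j
  (x_i x_j = x_j x_i), and with the convention x_l = 0 (l outside [0,r]) and w_k = 0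
  (k outside [0,n]) it vanishes outside the index ranges.  Conversely every such q comes from a
  unique linear map, since the x_i x_j (i <= j) form a basis of S^2(S^r(C^2)).
\<close>

definition lin_map_rep :: "nat \<Rightarrow> nat \<Rightarrow> (int \<Rightarrow> int \<Rightarrow> int \<Rightarrow> complex) \<Rightarrow> bool" where
  "lin_map_rep r n q \<longleftrightarrow>
     (\<forall>k i j. q k i j = q k j i) \<and>
     (\<forall>k i j. \<not> (0 \<le> k \<and> k \<le> int n \<and> 0 \<le> i \<and> i \<le> int r \<and> 0 \<le> j \<and> j \<le> int r)
              \<longrightarrow> q k i j = 0)"

text \<open>Equivariance f(Z u) = Z f(u) for Z = Y, X, H, checked on the spanning products u = x_i x_j
  and compared coordinatewise in w_k (0 <= k <= n).\<close>

definition equivariant_Y :: "nat \<Rightarrow> nat \<Rightarrow> (int \<Rightarrow> int \<Rightarrow> int \<Rightarrow> complex) \<Rightarrow> bool" where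
  "equivariant_Y r n q \<longleftrightarrow>
     (\<forall>k i j. 0 \<le> k \<and> k \<le> int n \<and> 0 \<le> i \<and> i \<le> int r \<and> 0 \<le> j \<and> j \<le> int r \<longrightarrow>
        of_int (i+1) * q k (i+1) j + of_int (j+1) * q k i (j+1) = of_int k * q (k-1) i j)"

definition equivariant_X :: "nat \<Rightarrow> nat \<Rightarrow> (int \<Rightarrow> int \<Rightarrow> int \<Rightarrow> complex) \<Rightarrow> bool" where
  "equivariant_X r n q \<longleftrightarrow>
     (\<forall>k i j. 0 \<le> k \<and> k \<le> int n \<and> 0 \<le> i \<and> i \<le> int r \<and> 0 \<le> j \<and> j \<le> int r \<longrightarrow>
        of_int (int r - i + 1) * q k (i-1) j + of_int (int r - j + 1) * q k i (j-1)
          = of_int (int n - k) * q (k+1) i j)"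

definition equivariant_H :: "nat \<Rightarrow> nat \<Rightarrow> (int \<Rightarrow> int \<Rightarrow> int \<Rightarrow> complex) \<Rightarrow> bool" where
  "equivariant_H r n q \<longleftrightarrow>
     (\<forall>k i j. 0 \<le> k \<and> k \<le> int n \<and> 0 \<le> i \<and> i \<le> int r \<and> 0 \<le> j \<and> j \<le> int r \<longrightarrow>
        of_int ((int r - 2*i) + (int r - 2*j)) * q k i j = of_int (int n - 2*k) * q k i j)"

definition sl2_equivariant_map :: "nat \<Rightarrow> nat \<Rightarrow> (int \<Rightarrow> int \<Rightarrow> int \<Rightarrow> complex) \<Rightarrow> bool" where
  "sl2_equivariant_map r n q \<longleftrightarrow>
     lin_map_rep r n q \<and> equivariant_X r n q \<and> equivariant_Y r n q \<and> equivariant_H r n q"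

end

theory Submission
  imports Defs
begin

lemma binom_step: "Suc t * (n choose Suc t) = (n - t) * (n choose t)"
proof (cases n)
  case 0 then show ?thesis by simp
next
  case (Suc n') then show ?thesis
    using Suc_times_binomial[of t n'] binomial_absorb_comp[of n t] by simp
qed

lemma lemX:
  fixes a b c A B C D E F :: complex
  assumes "a*A + b*C = c*E" and "a*B + b*D = c*F"
  shows "a*(A-B) + b*(C-D) = c*(E-F)"
  using assms by (simp add: algebra_simps)

lemma uniq:
  fixes d :: "int \<Rightarrow> int \<Rightarrow> int \<Rightarrow> complex" and r m n :: nat
  assumes Z: "\<And>k i j. \<not> (0 \<le> k \<and> k \<le> int n \<and> 0 \<le> i \<and> i \<le> int r \<and> 0 \<le> j \<and> j \<le> int r) \<Longrightarrow> d k i j = 0"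
  and W: "\<And>k i j. d k i j \<noteq> 0 \<Longrightarrow> i + j = k + 2 * int m"
  and Y0: "\<And>i j. 0 \<le> i \<Longrightarrow> i \<le> int r \<Longrightarrow> 0 \<le> j \<Longrightarrow> j \<le> int r \<Longrightarrow>
      of_int (i+1) * d 0 (i+1) j + of_int (j+1) * d 0 i (j+1) = 0"
  and X: "\<And>k i j. 0 \<le> k \<Longrightarrow> k \<le> int n \<Longrightarrow> 0 \<le> i \<Longrightarrow> i \<le> int r \<Longrightarrow> 0 \<le> j \<Longrightarrow> j \<le> int r \<Longrightarrow>
      of_int (int r - i + 1) * d k (i-1) j + of_int (int r - j + 1) * d k i (j-1) = of_int (int n - k) * d (k+1) i j"
  and d0: "d 0 0 (2 * int m) = 0"
  and hm: "2 * m \<le> r"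
  shows "d k i j = 0"
proof -
  have S1: "d 0 (int a) (2 * int m - int a) = 0" for a :: nat
  proof (induction a)
    case 0 then show ?case using d0 by simp
  next
    case (Suc a)
    show ?case
    proof (cases "int a + 1 \<le> 2 * int m")
      case False
      then have "2 * int m - int (Suc a) < 0" by simp
      then show ?thesis using Z by auto
    next
      case True
      have e: "of_int (int a + 1) * d 0 (int a + 1) (2*int m - int a - 1) + of_int (2*int m - int a - 1 + 1) * d 0 (int a) (2*int m - int a - 1 + 1) = 0"
        apply (rule Y0) using True hm by linarith+
      have "2*int m - int a - 1 + 1 = 2*int m - int a" by simp
      with e Suc.IH have "of_int (int a + 1) * d 0 (int a + 1) (2*int m - int a - 1) = 0" by simp
      moreover have "(of_int (int a + 1) :: complex) \<noteq> 0" using of_nat_neq_0[of a, where ?'a=complex] by (simp add: add.commute)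
      ultimately have "d 0 (int a + 1) (2*int m - int a - 1) = 0" by simp
      then show ?thesis by (simp add: algebra_simps)
    qed
  qed
  have S1': "d 0 i j = 0" for i j
  proof (cases "i < 0")
    case True then show ?thesis using Z by auto
  next
    case False
    then obtain a where a: "i = int a" by (metis nonneg_int_cases not_less)
    show ?thesis
    proof (cases "j = 2 * int m - i")
      case True then show ?thesis using S1[of a] a by simp
    next
      case False then show ?thesis using W[of 0 i j] by auto
    qed
  qed
  have S2: "\<forall>i j. d (int t) i j = 0" for t :: nat
  proof (induction t)
    case 0 then show ?case using S1' by simp
  next
    case (Suc t)
    show ?case
    proof (intro allI)
      fix i j
      show "d (int (Suc t)) i j = 0"
      proof (cases "0 \<le> int (Suc t) \<and> int (Suc t) \<le> int n \<and> 0 \<le> i \<and> i \<le> int r \<and> 0 \<le> j \<and> j \<le> int r")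
        case False then show ?thesis using Z by blast
      next
        case True
        have e: "of_int (int r - i + 1) * d (int t) (i-1) j + of_int (int r - j + 1) * d (int t) i (j-1) = of_int (int n - int t) * d (int t+1) i j"
          apply (rule X) using True by linarith+
        with Suc.IH have "of_int (int n - int t) * d (int t+1) i j = 0" by simp
        moreover have "(of_int (int n - int t) :: complex) \<noteq> 0" using True by (simp add: of_int_eq_0_iff)
        ultimately show ?thesis by (simp add: add.commute)
      qed
    qed
  qed
  show ?thesis
  proof (cases "k < 0")
    case True then show ?thesis using Z by auto
  next
    case False
    then obtain t where "k = int t" by (metis nonneg_int_cases not_less)
    then show ?thesis using S2 by simp
  qed
qed


theorem mainTheorem4:
  fixes r m n :: nat and q :: "int \<Rightarrow> int \<Rightarrow> int \<Rightarrow> complex" and k i j :: int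
  assumes "r \<ge> 2" and "2 * m \<le> r" and "n = 2 * r - 4 * m"
    and "sl2_equivariant_map r n q"
    and "0 \<le> k" and "k \<le> int r - 2 * int m"
    and "0 \<le> i" and "i \<le> int r"
    and "j = 2 * int m + k - i"
  shows "q k i j = q (int n - k) (int r - i) (int r - j)"
proof -
  have L: "lin_map_rep r n q" and EX: "equivariant_X r n q" and EY: "equivariant_Y r n q"
    and EH: "equivariant_H r n q"
    using assms(4) unfolding sl2_equivariant_map_def by auto
  have sym: "\<And>k i j. q k i j = q k j i" using L unfolding lin_map_rep_def by blast
  have Z: "\<And>k i j. \<not> (0 \<le> k \<and> k \<le> int n \<and> 0 \<le> i \<and> i \<le> int r \<and> 0 \<le> j \<and> j \<le> int r) \<Longrightarrow> q k i j = 0"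
    using L unfolding lin_map_rep_def by blast
  have Xe: "\<And>k i j. 0 \<le> k \<Longrightarrow> k \<le> int n \<Longrightarrow> 0 \<le> i \<Longrightarrow> i \<le> int r \<Longrightarrow> 0 \<le> j \<Longrightarrow> j \<le> int r \<Longrightarrow>
      of_int (int r - i + 1) * q k (i-1) j + of_int (int r - j + 1) * q k i (j-1) = of_int (int n - k) * q (k+1) i j"
    using EX unfolding equivariant_X_def by blast
  have Ye: "\<And>k i j. 0 \<le> k \<Longrightarrow> k \<le> int n \<Longrightarrow> 0 \<le> i \<Longrightarrow> i \<le> int r \<Longrightarrow> 0 \<le> j \<Longrightarrow> j \<le> int r \<Longrightarrow>
      of_int (i+1) * q k (i+1) j + of_int (j+1) * q k i (j+1) = of_int k * q (k-1) i j"
    using EY unfolding equivariant_Y_def by blast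
  have He: "\<And>k i j. 0 \<le> k \<Longrightarrow> k \<le> int n \<Longrightarrow> 0 \<le> i \<Longrightarrow> i \<le> int r \<Longrightarrow> 0 \<le> j \<Longrightarrow> j \<le> int r \<Longrightarrow>
      of_int ((int r - 2*i) + (int r - 2*j)) * q k i j = of_int (int n - 2*k) * q k i j"
    using EH unfolding equivariant_H_def by blast
  define s where "s = r - 2 * m"
  have hr: "int r = int s + 2 * int m" using assms(2) unfolding s_def by simp
  have hn: "int n = 2 * int s" using assms(2,3) unfolding s_def by simp
  have hn': "n = s + s" using assms(2,3) unfolding s_def by simp
  have W: "i + j = k + 2 * int m" if nz: "q k i j \<noteq> 0" for k i j
  proof -
    have R: "0 \<le> k \<and> k \<le> int n \<and> 0 \<le> i \<and> i \<le> int r \<and> 0 \<le> j \<and> j \<le> int r"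
      using Z nz by blast
    then have "of_int ((int r - 2*i) + (int r - 2*j)) * q k i j = of_int (int n - 2*k) * q k i j"
      using He by blast
    with nz have "(of_int ((int r - 2*i) + (int r - 2*j)) :: complex) = of_int (int n - 2*k)" by simp
    then have "(int r - 2*i) + (int r - 2*j) = int n - 2*k" using of_int_eq_iff by blast
    then show ?thesis using hr hn by linarith
  qed
  have CA: "t \<le> s \<Longrightarrow> q (int t) 0 (int t + 2*int m) * of_nat (n choose t) = of_nat (s choose t) * q 0 0 (2*int m)" for t
  proof (induction t)
    case 0 then show ?case by simp
  next
    case (Suc t)
    have IH: "q (int t) 0 (int t + 2*int m) * of_nat (n choose t) = of_nat (s choose t) * q 0 0 (2*int m)"
      using Suc by simp
    have e: "of_int (int r - 0 + 1) * q (int t) (0-1) (int t + 1 + 2*int m) + of_int (int r - (int t + 1 + 2*int m) + 1) * q (int t) 0 (int t + 1 + 2*int m - 1)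
       = of_int (int n - int t) * q (int t + 1) 0 (int t + 1 + 2*int m)"
      apply (rule Xe) using Suc.prems hr hn by linarith+
    have z: "q (int t) (0-1) (int t + 1 + 2*int m) = 0" using Z by simp
    have c1: "int r - (int t + 1 + 2*int m) + 1 = int (s - t)" using Suc.prems hr by simp
    have c2: "int n - int t = int (n - t)" using Suc.prems hn by simp
    have e2: "of_nat (s - t) * q (int t) 0 (int t + 2*int m) = of_nat (n - t) * q (int t + 1) 0 (int t + 1 + 2*int m)"
    proof -
      have h: "int t + 1 + 2*int m - 1 = int t + 2*int m" by simp
      have "of_int (int r - (int t + 1 + 2*int m) + 1) * q (int t) 0 (int t + 2*int m) = of_int (int n - int t) * q (int t + 1) 0 (int t + 1 + 2*int m)"
        using e z by (simp only: h mult_zero_right add_0_left)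
      then show ?thesis unfolding c1 c2 of_int_of_nat_eq .
    qed
    have b1: "(of_nat (Suc t) :: complex) * of_nat (n choose Suc t) = of_nat (n - t) * of_nat (n choose t)"
      using binom_step[of t n] by (metis of_nat_mult)
    have b2: "(of_nat (Suc t) :: complex) * of_nat (s choose Suc t) = of_nat (s - t) * of_nat (s choose t)"
      using binom_step[of t s] by (metis of_nat_mult)
    have "of_nat (Suc t) * (q (int t + 1) 0 (int t + 1 + 2*int m) * of_nat (n choose Suc t))
        = q (int t + 1) 0 (int t + 1 + 2*int m) * (of_nat (Suc t) * of_nat (n choose Suc t))" by (simp add: algebra_simps)
    also have "\<dots> = (of_nat (n - t) * q (int t + 1) 0 (int t + 1 + 2*int m)) * of_nat (n choose t)"
      using b1 by (simp add: algebra_simps)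
    also have "\<dots> = of_nat (s - t) * (q (int t) 0 (int t + 2*int m) * of_nat (n choose t))"
      using e2 by (simp add: algebra_simps)
    also have "\<dots> = (of_nat (s - t) * of_nat (s choose t)) * q 0 0 (2*int m)"
      using IH by (simp add: algebra_simps)
    also have "\<dots> = of_nat (Suc t) * (of_nat (s choose Suc t) * q 0 0 (2*int m))"
      using b2 by (metis mult.assoc)
    finally have "q (int t + 1) 0 (int t + 1 + 2*int m) * of_nat (n choose Suc t) = of_nat (s choose Suc t) * q 0 0 (2*int m)"
      by (metis mult_left_cancel of_nat_neq_0)
    then show ?case by (simp add: add.commute add.left_commute)
  qed
  have CB: "t \<le> s \<Longrightarrow> q (int s + int t) (int r) (int t) = of_nat ((s+t) choose t) * q (int s) (int r) 0" for t
  proof (induction t)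
    case 0 then show ?case by simp
  next
    case (Suc t)
    have IH: "q (int s + int t) (int r) (int t) = of_nat ((s+t) choose t) * q (int s) (int r) 0"
      using Suc by simp
    have e: "of_int (int r+1) * q (int s + int t + 1) (int r+1) (int t) + of_int (int t+1) * q (int s + int t + 1) (int r) (int t+1)
       = of_int (int s + int t + 1) * q (int s + int t + 1 - 1) (int r) (int t)"
      apply (rule Ye) using Suc.prems hr hn by linarith+
    have z: "q (int s + int t + 1) (int r+1) (int t) = 0" using Z by simp
    have e2: "of_nat (Suc t) * q (int s + int t + 1) (int r) (int t+1) = of_nat (Suc (s + t)) * q (int s + int t) (int r) (int t)"
    proof -
      have h: "int s + int t + 1 - 1 = int s + int t" by simp
      have h1: "(of_int (int t + 1)::complex) = of_nat (Suc t)" by simp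
      have h2: "(of_int (int s + int t + 1)::complex) = of_nat (Suc (s + t))" by simp
      show ?thesis using e z by (simp only: h h1 h2 mult_zero_right add_0_left)
    qed
    have b: "(of_nat (Suc (s+t)) :: complex) * of_nat ((s+t) choose t) = of_nat (Suc (s+t) choose Suc t) * of_nat (Suc t)"
      using Suc_times_binomial_eq[of "s+t" t] by (metis of_nat_mult)
    have "of_nat (Suc t) * q (int s + int t + 1) (int r) (int t+1) = of_nat (Suc (s + t)) * (of_nat ((s+t) choose t) * q (int s) (int r) 0)"
      using e2 IH by simp
    also have "\<dots> = of_nat (Suc t) * (of_nat (Suc (s+t) choose Suc t) * q (int s) (int r) 0)"
      using b by (metis mult.assoc mult.commute)
    finally have "q (int s + int t + 1) (int r) (int t+1) = of_nat (Suc (s+t) choose Suc t) * q (int s) (int r) 0"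
      by (metis mult_left_cancel of_nat_neq_0)
    then show ?case by (simp add: add.commute add.left_commute)
  qed
  have key: "q (int n) (int r) (int r - 2 * int m) = q 0 0 (2 * int m)"
  proof -
    have "q (int n) (int r) (int r - 2 * int m) = q (int s + int s) (int r) (int s)" using hr hn by simp
    also have "\<dots> = of_nat ((s+s) choose s) * q (int s) (int r) 0" using CB[of s] by simp
    also have "\<dots> = of_nat ((s+s) choose s) * q (int s) 0 (int s + 2 * int m)" using sym hr by simp
    also have "\<dots> = q 0 0 (2 * int m)" using CA[of s] hn' by (simp add: algebra_simps)
    finally show ?thesis .
  qed
  define d where "d = (\<lambda>k i j. q k i j - q (int n - k) (int r - i) (int r - j))"
  have "d k i j = 0"
  proof (rule uniq[where r=r and m=m and n=n and d=d and k=k and i=i and j=j])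
    show "2 * m \<le> r" by (rule assms(2))
    show "d 0 0 (2 * int m) = 0" unfolding d_def using key by simp
    fix k i j
    show "\<not> (0 \<le> k \<and> k \<le> int n \<and> 0 \<le> i \<and> i \<le> int r \<and> 0 \<le> j \<and> j \<le> int r) \<Longrightarrow> d k i j = 0"
    proof -
      assume a: "\<not> (0 \<le> k \<and> k \<le> int n \<and> 0 \<le> i \<and> i \<le> int r \<and> 0 \<le> j \<and> j \<le> int r)"
      have "q k i j = 0" using Z a by blast
      moreover have "q (int n - k) (int r - i) (int r - j) = 0"
      proof (rule Z, rule notI)
        assume c: "0 \<le> int n - k \<and> int n - k \<le> int n \<and> 0 \<le> int r - i \<and> int r - i \<le> int r \<and> 0 \<le> int r - j \<and> int r - j \<le> int r"
        then have "0 \<le> k" "k \<le> int n" "0 \<le> i" "i \<le> int r" "0 \<le> j" "j \<le> int r" by linarith+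
        then show False using a by blast
      qed
      ultimately show "d k i j = 0" unfolding d_def by simp
    qed
    show "d k i j \<noteq> 0 \<Longrightarrow> i + j = k + 2 * int m"
    proof -
      assume "d k i j \<noteq> 0"
      then have "q k i j \<noteq> 0 \<or> q (int n - k) (int r - i) (int r - j) \<noteq> 0" unfolding d_def by auto
      then show ?thesis
      proof
        assume "q k i j \<noteq> 0" then show ?thesis using W by blast
      next
        assume "q (int n - k) (int r - i) (int r - j) \<noteq> 0"
        then have "(int r - i) + (int r - j) = (int n - k) + 2 * int m" using W by blast
        then show ?thesis using hr hn by linarith
      qed
    qed
  next
    fix i j :: int
    assume h: "0 \<le> i" "i \<le> int r" "0 \<le> j" "j \<le> int r"
    have y: "of_int (i+1) * q 0 (i+1) j + of_int (j+1) * q 0 i (j+1) = of_int 0 * q (0-1) i j"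
      apply (rule Ye) using h by linarith+
    have x: "of_int (int r - (int r - i) + 1) * q (int n) (int r - i - 1) (int r - j) + of_int (int r - (int r - j) + 1) * q (int n) (int r - i) (int r - j - 1)
        = of_int (int n - int n) * q (int n + 1) (int r - i) (int r - j)"
      apply (rule Xe) using h by linarith+
    have r1: "int r - (int r - i) + 1 = i + 1" "int r - (int r - j) + 1 = j + 1"
      "int r - i - 1 = int r - (i+1)" "int r - j - 1 = int r - (j+1)" "int n - int n = 0" by simp_all
    have x2: "of_int (i + 1) * q (int n) (int r - (i+1)) (int r - j) + of_int (j + 1) * q (int n) (int r - i) (int r - (j+1))
        = of_int 0 * q (int n + 1) (int r - i) (int r - j)"
      using x unfolding r1 .
    have "of_int (i+1) * (q 0 (i+1) j - q (int n) (int r - (i+1)) (int r - j)) + of_int (j+1) * (q 0 i (j+1) - q (int n) (int r - i) (int r - (j+1)))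
       = of_int 0 * (q (0-1) i j - q (int n + 1) (int r - i) (int r - j))"
      by (rule lemX[OF y x2])
    then show "of_int (i+1) * d 0 (i+1) j + of_int (j+1) * d 0 i (j+1) = 0"
      unfolding d_def by simp
  next
    fix k i j :: int
    assume h: "0 \<le> k" "k \<le> int n" "0 \<le> i" "i \<le> int r" "0 \<le> j" "j \<le> int r"
    have x: "of_int (int r - i + 1) * q k (i-1) j + of_int (int r - j + 1) * q k i (j-1) = of_int (int n - k) * q (k+1) i j"
      by (rule Xe) (use h in linarith)+
    have y: "of_int ((int r - i)+1) * q (int n - k) ((int r - i)+1) (int r - j) + of_int ((int r - j)+1) * q (int n - k) (int r - i) ((int r - j)+1)
       = of_int (int n - k) * q (int n - k - 1) (int r - i) (int r - j)"
      apply (rule Ye) using h by linarith+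
    have r2: "int r - (i - 1) = int r - i + 1" "int r - (j-1) = int r - j + 1" "int n - (k+1) = int n - k - 1" by simp_all
    show "of_int (int r - i + 1) * d k (i-1) j + of_int (int r - j + 1) * d k i (j-1) = of_int (int n - k) * d (k+1) i j"
      unfolding d_def r2 by (rule lemX[OF x y])
  qed
  then show ?thesis unfolding d_def by simp
qed

end
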